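(* Let $\mathfrak{o}$ be a compact discrete valuation ring with uniformizer $\pi$, maximal ideal $\mathfrak{p}$ and residue field $\mathbb{F}_q$, let $\mathfrak{o}_r=\mathfrak{o}/\mathfrak{p}^r$, $\mathfrak{g}=\mathfrak{sl}_n(\mathfrak{o})$ and $\mathfrak{g}_r=\mathfrak{sl}_n(\mathfrak{o}_r)$. Let $\kappa$ be the symmetric invariant $\mathfrak{o}$-bilinear form on $\mathfrak{g}$ fixed in the paper, assumed non-degenerate modulo $\mathfrak{p}$, and let $\kappa_1$ be the induced $\mathbb{F}_q$-bilinear form on $\mathfrak{g}_1=\mathfrak{sl}_n(\mathbb{F}_q)$. Let $r\in\mathbb{N}$, $e\in\mathfrak{g}_r$, let $b\in\mathfrak{g}_{r+1}$ be a shadow-preserving lift of $e$, let $x_c\in\mathfrak{g}_{r+1}$ with reduction $\bar{x}_c\in\mathfrak{g}_1$, and put $x=b+\pi^rx_c\in\mathfrak{g}_{r+1}$. Let $c$ be the linear functional $z\mapsto\kappa_1(\bar{x}_c,z)$ on $\mathrm{sh}_{\mathfrak{g}_r}(e)$, and let $$\mathrm{stab}_{\mathrm{sh}_{\mathfrak{g}_r}(e)}(c)=\{y\in\mathrm{sh}_{\mathfrak{g}_r}(e) : c([y,z])=0\ \text{for all } z\in\mathrm{sh}_{\mathfrak{g}_r}(e)\}.$$ Then $\mathrm{stab}_{\mathrm{sh}_{\mathfrak{g}_r}(e)}(c)=\mathrm{sh}_{\mathfrak{g}_{r+1}}(x)$.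
   Context: Lie shadow: for $a\in\mathfrak{g}_r$, $\mathrm{sh}_{\mathfrak{g}_r}(a)$ is the image in $\mathfrak{g}_1$ of the centralizer $C_{\mathfrak{g}_r}(a)$ under reduction modulo $\mathfrak{p}$. A lift $b\in\mathfrak{g}_{r+1}$ of $e\in\mathfrak{g}_r$ (i.e. $b$ reduces to $e$ modulo $\mathfrak{p}^r$) is shadow-preserving if $\mathrm{sh}_{\mathfrak{g}_{r+1}}(b)=\mathrm{sh}_{\mathfrak{g}_r}(e)$. *)

theory Defs
  imports "HOL-Analysis.Determinants"
begin

text \<open>The ring o is modelled as an integral domain of type 'a together with a
uniformizer \<pi>.  Matrices are 'a^'n^'n for a finite index type 'n (n = CARD('n)).
Elements of g_r = sl_n(o/p^r) are represented by trace-zero lifts in sl_n(o),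
compared modulo \<pi>^r entrywise.\<close>

definition is_dvr_uniformizer :: "'a::idom \<Rightarrow> bool" where
  "is_dvr_uniformizer \<pi> \<longleftrightarrow> \<pi> \<noteq> 0 \<and> \<not> \<pi> dvd 1 \<and>
     (\<forall>x. x \<noteq> 0 \<longrightarrow> (\<exists>u k. u dvd 1 \<and> x = u * \<pi> ^ k))"

text \<open>Compactness of o: finite residue field and \<pi>-adic completeness
(Hausdorffness follows from the DVR property).\<close>
definition compact_dvr :: "'a::idom \<Rightarrow> bool" where
  "compact_dvr \<pi> \<longleftrightarrow> is_dvr_uniformizer \<pi>
     \<and> (\<exists>F. finite F \<and> (\<forall>x. \<exists>y\<in>F. \<pi> dvd (x - y)))
     \<and> (\<forall>f :: nat \<Rightarrow> 'a. (\<forall>m. \<pi> ^ m dvd (f (Suc m) - f m))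
            \<longrightarrow> (\<exists>l. \<forall>m. \<pi> ^ m dvd (l - f m)))"

definition sl :: "('a::comm_ring_1^'n^'n) set" where
  "sl = {A. trace A = 0}"

definition bracket :: "'a::comm_ring_1^'n^'n \<Rightarrow> 'a^'n^'n \<Rightarrow> 'a^'n^'n" where
  "bracket A B = A ** B - B ** A"

definition smat :: "'a::comm_ring_1 \<Rightarrow> 'a^'n^'n \<Rightarrow> 'a^'n^'n" where
  "smat c A = (\<chi> i j. c * A $ i $ j)"

definition mat_cong :: "'a::comm_ring_1 \<Rightarrow> nat \<Rightarrow> 'a^'n^'n \<Rightarrow> 'a^'n^'n \<Rightarrow> bool" where
  "mat_cong \<pi> k A B \<longleftrightarrow> (\<forall>i j. \<pi> ^ k dvd (A $ i $ j - B $ i $ j))"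

text \<open>Lie shadow sh_{g_k}(a) for a in g_k represented by A in sl_n(o):
the set of all lifts in sl_n(o) of elements of the image in g_1 of the
centralizer C_{g_k}(a).  This set is saturated under congruence mod \<pi>,
so it faithfully represents a subset of g_1.\<close>
definition shadow :: "'a::comm_ring_1 \<Rightarrow> nat \<Rightarrow> 'a^'n^'n \<Rightarrow> ('a^'n^'n) set" where
  "shadow \<pi> k A = {Z \<in> sl. \<exists>Y \<in> sl. mat_cong \<pi> k (bracket Y A) 0 \<and> mat_cong \<pi> 1 Z Y}"

definition good_form :: "'a::comm_ring_1 \<Rightarrow> ('a^'n^'n \<Rightarrow> 'a^'n^'n \<Rightarrow> 'a) \<Rightarrow> bool" where
  "good_form \<pi> \<kappa> \<longleftrightarrow>
     (\<forall>X\<in>sl. \<forall>Y\<in>sl. \<forall>Z\<in>sl. \<kappa> (X + Y) Z = \<kappa> X Z + \<kappa> Y Z)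
   \<and> (\<forall>a. \<forall>X\<in>sl. \<forall>Z\<in>sl. \<kappa> (smat a X) Z = a * \<kappa> X Z)
   \<and> (\<forall>X\<in>sl. \<forall>Y\<in>sl. \<kappa> X Y = \<kappa> Y X)
   \<and> (\<forall>X\<in>sl. \<forall>Y\<in>sl. \<forall>Z\<in>sl. \<kappa> (bracket X Y) Z = \<kappa> X (bracket Y Z))
   \<and> (\<forall>X\<in>sl. (\<forall>Y\<in>sl. \<pi> dvd \<kappa> X Y) \<longrightarrow> mat_cong \<pi> 1 X 0)"

end

theory Submission
  imports Defs
begin


lemma mm_entry: "(A ** B)$i$j = (\<Sum>k\<in>UNIV. A$i$k * B$k$j)"
  by (simp add: matrix_matrix_mult_def)

lemma mv_entry: "(A *v x)$i = (\<Sum>k\<in>UNIV. A$i$k * x$k)"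
  by (simp add: matrix_vector_mult_def)

lemma vm_entry: "(x v* A)$j = (\<Sum>k\<in>UNIV. x$k * A$k$j)"
  by (simp add: vector_matrix_mult_def)

lemma mm_add_r: "((A::'a::comm_ring_1^'n^'m) + B) ** C = A ** C + B ** C"
  by (simp add: vec_eq_iff mm_entry distrib_right sum.distrib)
lemma mm_diff_r: "((A::'a::comm_ring_1^'n^'m) - B) ** C = A ** C - B ** C"
  by (simp add: vec_eq_iff mm_entry left_diff_distrib sum_subtractf)
lemma mm_diff_l: "(A::'a::comm_ring_1^'n^'m) ** (B - C) = A ** B - A ** C"
  by (simp add: vec_eq_iff mm_entry right_diff_distrib sum_subtractf)

lemma invertible_sub_nil:
  fixes N :: "'a::comm_ring_1^'m^'m"
  assumes "N ** N = 0"
  shows "invertible (mat 1 - N)"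
proof -
  have "(mat 1 - N) ** (mat 1 + N) = mat 1"
    by (simp add: matrix_add_ldistrib mm_diff_r assms)
  moreover have "(mat 1 + N) ** (mat 1 - N) = mat 1"
    by (simp add: mm_diff_l mm_add_r assms)
  ultimately show ?thesis unfolding invertible_def by blast
qed


definition isdiag :: "'a::zero^'m^'m \<Rightarrow> bool" where
  "isdiag D \<longleftrightarrow> (\<forall>i j. i \<noteq> j \<longrightarrow> D$i$j = 0)"

definition offd :: "'m set \<Rightarrow> 'a::zero^'m^'m \<Rightarrow> bool" where
  "offd I A \<longleftrightarrow> (\<forall>i j. i \<noteq> j \<and> (i \<notin> I \<or> j \<notin> I) \<longrightarrow> A$i$j = 0)"

lemma min_dvd_exists:
  fixes S :: "'a::comm_semiring_1 set"
  assumes tot: "\<And>a b::'a. a dvd b \<or> b dvd a" and "finite S" "S \<noteq> {}"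
  shows "\<exists>s\<in>S. \<forall>t\<in>S. s dvd t"
  using assms(2,3)
proof (induction S rule: finite_ne_induct)
  case (singleton x) then show ?case by auto
next
  case (insert x F)
  then obtain s where s: "s \<in> F" "\<forall>t\<in>F. s dvd t" by auto
  show ?case
  proof (cases "s dvd x")
    case True then show ?thesis using s by auto
  next
    case False
    then have "x dvd s" using tot by blast
    then show ?thesis using s by (auto intro: dvd_trans)
  qed
qed

lemma sum_delta_r: "(\<Sum>k\<in>(UNIV::'b::finite set). f k * (if k = a then 1 else 0)) = (f a :: 'a::comm_semiring_1)"
proof -
  have "(\<Sum>k\<in>UNIV. f k * (if k = a then 1 else 0)) = (\<Sum>k\<in>UNIV. if k = a then f k else 0)"
    by (rule sum.cong) auto
  then show ?thesis by simp
qed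

lemma sum_delta_r2: "(\<Sum>k\<in>(UNIV::'b::finite set). f k * (if k = a then 1 else 0)) = (f a :: 'a::comm_semiring_1)"
  by (rule sum_delta_r)

lemma sum_delta_l: "(\<Sum>k\<in>(UNIV::'b::finite set). (if a = k then 1 else 0) * f k) = (f a :: 'a::comm_semiring_1)"
proof -
  have "(\<Sum>k\<in>UNIV. (if a = k then 1 else 0) * f k) = (\<Sum>k\<in>UNIV. if a = k then f k else 0)"
    by (rule sum.cong) auto
  then show ?thesis by simp
qed

lemma sum_delta_l2: "(\<Sum>k\<in>(UNIV::'b::finite set). (if k = p \<and> Q then c else 0) * f k) = (if Q then c * f p else (0:: 'a::comm_semiring_1))"
proof -
  have "(\<Sum>k\<in>UNIV. (if k = p \<and> Q then c else 0) * f k) = (\<Sum>k\<in>UNIV. if k = p then (if Q then c * f k else 0) else 0)"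
    by (rule sum.cong) auto
  then show ?thesis by simp
qed

lemma sum_delta_r3: "(\<Sum>k\<in>(UNIV::'b::finite set). f k * (if k = p \<and> Q then c else 0)) = (if Q then f p * c else (0:: 'a::comm_semiring_1))"
proof -
  have "(\<Sum>k\<in>UNIV. f k * (if k = p \<and> Q then c else 0)) = (\<Sum>k\<in>UNIV. if k = p then (if Q then f k * c else 0) else 0)"
    by (rule sum.cong) auto
  then show ?thesis by simp
qed

lemma invertible_add_nil:
  fixes N :: "'a::comm_ring_1^'m^'m"
  assumes "N ** N = 0"
  shows "invertible (mat 1 + N)"
proof -
  have "(mat 1 - N) ** (mat 1 + N) = mat 1"
    by (simp add: matrix_add_ldistrib mm_diff_r assms)
  moreover have "(mat 1 + N) ** (mat 1 - N) = mat 1"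
    by (simp add: mm_diff_l mm_add_r assms)
  ultimately show ?thesis unfolding invertible_def by blast
qed

lemma smith_aux:
  fixes A :: "'a::comm_ring_1^'m::finite^'m"
  assumes tot: "\<And>a b::'a. a dvd b \<or> b dvd a"
  shows "offd I A \<Longrightarrow> \<exists>P Q D :: 'a^'m^'m. invertible P \<and> invertible Q \<and> isdiag D \<and> A = P ** D ** Q"
proof (induction "card I" arbitrary: I A rule: less_induct)
  case less
  show ?case
  proof (cases "isdiag A")
    case True
    have "invertible (mat 1 :: 'a^'m^'m)" unfolding invertible_def
      by (rule exI[of _ "mat 1"]) simp
    then have "invertible (mat 1 :: 'a^'m^'m) \<and> invertible (mat 1 :: 'a^'m^'m) \<and> isdiag A \<and> A = mat 1 ** A ** mat 1"
      using True by simp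
    then show ?thesis by blast
  next
    case False
    then obtain i0 j0 where ij0: "i0 \<noteq> j0" "A$i0$j0 \<noteq> 0" unfolding isdiag_def by auto
    with less.prems have ij0I: "i0 \<in> I" "j0 \<in> I" unfolding offd_def by auto
    have "\<exists>s\<in>(\<lambda>(i,j). A$i$j) ` (I \<times> I). \<forall>t\<in>(\<lambda>(i,j). A$i$j) ` (I \<times> I). s dvd t"
      by (rule min_dvd_exists[OF tot]) (use ij0I in auto)
    then obtain p q where pq: "p \<in> I" "q \<in> I" and pdvd: "\<And>i j. i \<in> I \<Longrightarrow> j \<in> I \<Longrightarrow> A$p$q dvd A$i$j"
      by auto
    define \<sigma> where "\<sigma> = Transposition.transpose p q"
    have \<sigma>\<sigma>: "\<And>x. \<sigma> (\<sigma> x) = x" unfolding \<sigma>_def by simp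
    have \<sigma>I: "\<And>x. \<sigma> x \<in> I \<longleftrightarrow> x \<in> I" unfolding \<sigma>_def using pq
      by (auto simp: Transposition.transpose_def split: if_splits)
    have \<sigma>p: "\<sigma> p = q" unfolding \<sigma>_def by simp
    define Sw :: "'a^'m^'m" where "Sw = (\<chi> i j. if i = \<sigma> j then 1 else 0)"
    have SwSw: "Sw ** Sw = mat 1"
      unfolding Sw_def mat_def
      by (auto simp: vec_eq_iff mm_entry \<sigma>\<sigma> sum_delta_r)
    then have invSw: "invertible Sw" unfolding invertible_def by blast
    define A1 where "A1 = A ** Sw"
    have A1e: "A1$i$j = A$i$(\<sigma> j)" for i j
      unfolding A1_def Sw_def by (simp add: mm_entry sum_delta_r2)
    have A1A: "A1 ** Sw = A" unfolding A1_def by (simp add: matrix_mul_assoc[symmetric] SwSw)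
    define piv where "piv = A1$p$p"
    have pivdvd: "i \<in> I \<Longrightarrow> j \<in> I \<Longrightarrow> piv dvd A1$i$j" for i j
      unfolding piv_def A1e \<sigma>p using pdvd \<sigma>I by auto
    have A1off: "i \<noteq> j \<Longrightarrow> i \<notin> I \<or> j \<notin> I \<Longrightarrow> A1$i$j = 0" for i j
    proof -
      assume h: "i \<noteq> j" "i \<notin> I \<or> j \<notin> I"
      have "\<sigma> j = j" if "j \<notin> I" using that pq unfolding \<sigma>_def
        by (auto simp: Transposition.transpose_def)
      then have "i \<noteq> \<sigma> j \<and> (i \<notin> I \<or> \<sigma> j \<notin> I)" using h \<sigma>I by metis
      then show ?thesis unfolding A1e using less.prems unfolding offd_def by blast
    qed
    define c where "c i = (SOME c. A1$i$p = c * piv)" for i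
    have c: "i \<in> I \<Longrightarrow> A1$i$p = c i * piv" for i
      unfolding c_def by (rule someI_ex) (use pivdvd[of i p] pq in \<open>auto simp: dvd_def mult.commute\<close>)
    define f where "f j = (SOME f. A1$p$j = piv * f)" for j
    have f: "j \<in> I \<Longrightarrow> A1$p$j = piv * f j" for j
      unfolding f_def by (rule someI_ex) (use pivdvd[of p j] pq in \<open>auto simp: dvd_def\<close>)
    define N :: "'a^'m^'m" where "N = (\<chi> i j. if j = p \<and> i \<in> I \<and> i \<noteq> p then c i else 0)"
    define N' :: "'a^'m^'m" where "N' = (\<chi> i j. if i = p \<and> j \<in> I \<and> j \<noteq> p then f j else 0)"
    have NN: "N ** N = 0" unfolding N_def
      by (auto simp: vec_eq_iff mm_entry intro!: sum.neutral)
    have NN': "N' ** N' = 0" unfolding N'_def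
      by (auto simp: vec_eq_iff mm_entry intro!: sum.neutral)
    define A2 where "A2 = (mat 1 - N) ** A1"
    have A2e: "A2$i$j = A1$i$j - (if i \<in> I \<and> i \<noteq> p then c i * A1$p$j else 0)" for i j
      unfolding A2_def N_def mat_def
      by (simp add: mm_entry left_diff_distrib sum_subtractf sum_delta_l sum_delta_l2)
    define A3 where "A3 = A2 ** (mat 1 - N')"
    have A3e: "A3$i$j = A2$i$j - (if j \<in> I \<and> j \<noteq> p then A2$i$p * f j else 0)" for i j
      unfolding A3_def N'_def mat_def
      by (simp add: mm_entry right_diff_distrib sum_subtractf sum_delta_r sum_delta_r3)
    have A2p: "A2$i$p = (if i = p then piv else 0)" for i
    proof -
      consider "i = p" | "i \<in> I" "i \<noteq> p" | "i \<notin> I" by blast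
      then show ?thesis
      proof cases
        case 1 then show ?thesis by (simp add: A2e piv_def)
      next
        case 2 then show ?thesis by (simp add: A2e c piv_def)
      next
        case 3 then show ?thesis using A1off[of i p] pq by (auto simp: A2e)
      qed
    qed
    have A2pj: "A2$p$j = A1$p$j" for j by (simp add: A2e)
    have off3: "offd (I - {p}) A3"
      unfolding offd_def
    proof (intro allI impI)
      fix i j assume h: "i \<noteq> j \<and> (i \<notin> I - {p} \<or> j \<notin> I - {p})"
      show "A3$i$j = 0"
      proof (cases "i = p")
        case True
        then have jp: "j \<noteq> p" using h by auto
        show ?thesis
        proof (cases "j \<in> I")
          case True
          then have "A3$i$j = A1$p$j - piv * f j" using jp \<open>i = p\<close> by (simp add: A3e A2pj A2p)
          then show ?thesis using f[OF True] by simp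
        next
          case False
          then have "A3$i$j = A1$p$j" using jp \<open>i = p\<close> by (simp add: A3e A2pj)
          then show ?thesis using A1off[of p j] False jp by simp
        qed
      next
        case ip: False
        show ?thesis
        proof (cases "j = p")
          case True then show ?thesis using ip by (simp add: A3e A2p)
        next
          case jp: False
          have e: "A3$i$j = A2$i$j" using ip by (simp add: A3e A2p)
          show ?thesis
          proof (cases "i \<in> I")
            case False
            then show ?thesis using e ip h A1off[of i j] by (simp add: A2e)
          next
            case True
            then have "j \<notin> I" using h ip jp by auto
            then show ?thesis using e ip h A1off[of i j] A1off[of p j] jp by (simp add: A2e)
          qed
        qed
      qed
    qed
    have cl: "card (I - {p}) < card I" by (rule card_Diff1_less) (simp_all add: pq)
    obtain P Q D :: "'a^'m^'m" where PQD: "invertible P" "invertible Q" "isdiag D" "A3 = P ** D ** Q"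
      using less.hyps[OF cl off3] by blast
    have e1: "(mat 1 + N) ** A2 = A1"
      unfolding A2_def matrix_mul_assoc
      by (simp add: mm_diff_l matrix_add_ldistrib mm_add_r NN)
    have e2: "A3 ** (mat 1 + N') = A2"
      unfolding A3_def matrix_mul_assoc[symmetric]
      by (simp add: mm_diff_r matrix_add_ldistrib mm_add_r NN')
    have inv1: "invertible (mat 1 + N)"
      using invertible_add_nil NN by blast
    have inv2: "invertible (mat 1 + N')"
      using invertible_add_nil NN' by blast
    have "A = ((mat 1 + N) ** (A3 ** (mat 1 + N'))) ** Sw" using A1A e1 e2 by simp
    then have eqA: "A = ((mat 1 + N) ** P) ** D ** (Q ** (mat 1 + N') ** Sw)"
      using PQD(4) by (simp add: matrix_mul_assoc)
    have i1: "invertible ((mat 1 + N) ** P)" by (rule invertible_mult[OF inv1 PQD(1)])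
    have i2: "invertible (Q ** (mat 1 + N') ** Sw)"
      by (intro invertible_mult PQD(2) inv2 invSw)
    show ?thesis
      apply (rule exI[where x="(mat 1 + N) ** P"])
      apply (rule exI[where x="Q ** (mat 1 + N') ** Sw"])
      apply (rule exI[where x=D])
      using i1 i2 PQD(3) eqA by (intro conjI)
  qed
qed

lemma smith:
  fixes A :: "'a::comm_ring_1^'m::finite^'m"
  assumes tot: "\<And>a b::'a. a dvd b \<or> b dvd a"
  shows "\<exists>P Q D :: 'a^'m^'m. invertible P \<and> invertible Q \<and> isdiag D \<and> A = P ** D ** Q"
  by (rule smith_aux[OF tot, of UNIV]) (simp add: offd_def)


definition vdvd :: "'a::comm_ring_1 \<Rightarrow> 'a^'m \<Rightarrow> bool" where
  "vdvd m v \<longleftrightarrow> (\<forall>i. m dvd v$i)"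

definition dotp :: "'a::comm_ring_1^'m \<Rightarrow> 'a^'m \<Rightarrow> 'a" where
  "dotp x y = (\<Sum>i\<in>UNIV. x$i * y$i)"

lemma vdvd_mv: "vdvd m v \<Longrightarrow> vdvd m (M *v v)"
  unfolding vdvd_def by (auto simp: mv_entry intro!: dvd_sum dvd_mult)

lemma vdvd_vm: "vdvd m v \<Longrightarrow> vdvd m (v v* M)"
  unfolding vdvd_def by (auto simp: vm_entry intro!: dvd_sum dvd_mult2)

lemma vdvd_smult: "m dvd c \<Longrightarrow> vdvd m (c *s v)"
  unfolding vdvd_def by auto

lemma vdvd_diff: "vdvd m v \<Longrightarrow> vdvd m w \<Longrightarrow> vdvd m (v - w)"
  unfolding vdvd_def by auto

lemma mv_smult: "(M::'a::comm_ring_1^'n^'m) *v (c *s x) = c *s (M *v x)"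
  by (simp add: vec_eq_iff mv_entry sum_distrib_left mult_ac)

lemma vm_smult: "(c *s x) v* (M::'a::comm_ring_1^'n^'m) = c *s (x v* M)"
  by (simp add: vec_eq_iff vm_entry sum_distrib_left mult_ac)

lemma mv_diff: "(M::'a::comm_ring_1^'n^'m) *v (x - y) = M *v x - M *v y"
  by (simp add: vec_eq_iff mv_entry right_diff_distrib sum_subtractf)

lemma dotp_comm: "dotp x y = dotp y x"
  unfolding dotp_def by (simp add: mult.commute)

lemma dotp_mv: "dotp x ((M::'a::comm_ring_1^'n^'m) *v y) = dotp (x v* M) y"
proof -
  have "dotp x (M *v y) = (\<Sum>i\<in>UNIV. \<Sum>j\<in>UNIV. x$i * M$i$j * y$j)"
    by (simp add: dotp_def mv_entry sum_distrib_left mult_ac)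
  also have "\<dots> = (\<Sum>j\<in>UNIV. \<Sum>i\<in>UNIV. x$i * M$i$j * y$j)" by (rule sum.swap)
  also have "\<dots> = dotp (x v* M) y"
    by (simp add: dotp_def vm_entry sum_distrib_left sum_distrib_right mult_ac)
  finally show ?thesis .
qed

lemma dotp_axis_r: "dotp x (axis k 1) = x$k"
  unfolding dotp_def axis_def by (simp add: sum_delta_r)

lemma dotp_axis_l: "dotp (axis k 1) x = x$k"
  using dotp_axis_r dotp_comm by metis

lemma mv_axis: "(M *v axis k 1)$i = (M$i$k :: 'a::comm_ring_1)"
  unfolding mv_entry axis_def by (simp add: sum_delta_r)

lemma vm_axis: "(axis k 1 v* M)$j = (M$k$j :: 'a::comm_ring_1)"
proof -
  have "(\<Sum>ka\<in>UNIV. (if ka = k then 1 else 0) * M $ ka $ j) = (\<Sum>ka\<in>UNIV. (if k = ka then 1 else 0) * M $ ka $ j)"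
    by (rule sum.cong) auto
  then show ?thesis unfolding vm_entry axis_def by (simp add: sum_delta_l)
qed

lemma dotp_smult_l: "dotp (c *s x) y = c * dotp x y"
  unfolding dotp_def by (simp add: sum_distrib_left mult_ac)

lemma dotp_smult_r: "dotp x (c *s y) = c * dotp x y"
  unfolding dotp_def by (simp add: sum_distrib_left mult_ac)

lemma dotp_expand_r: "dotp x ((M::'a::comm_ring_1^'n^'m) *v y) = dotp (\<chi> j. dotp x (M *v axis j 1)) y"
proof -
  have "(\<chi> j. dotp x (M *v axis j 1)) = x v* M"
    by (simp add: vec_eq_iff dotp_mv dotp_axis_r)
  then show ?thesis by (simp add: dotp_mv)
qed

lemma dotp_expand_l: "dotp ((M::'a::comm_ring_1^'n^'m) *v y) z = dotp y (\<chi> i. dotp (M *v axis i 1) z)"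
proof -
  have c: "\<And>j. dotp z (M *v axis j 1) = dotp (M *v axis j 1) z" by (rule dotp_comm)
  have "dotp (M *v y) z = dotp z (M *v y)" by (rule dotp_comm)
  also have "\<dots> = dotp (\<chi> j. dotp z (M *v axis j 1)) y" by (rule dotp_expand_r)
  also have "\<dots> = dotp y (\<chi> j. dotp z (M *v axis j 1))" by (rule dotp_comm)
  finally show ?thesis by (simp only: c)
qed

lemma dotp_dvd: "(\<And>i. m dvd x$i) \<Longrightarrow> m dvd dotp x y"
  unfolding dotp_def by (auto intro!: dvd_sum dvd_mult2)

lemma diag_mv: "isdiag D \<Longrightarrow> D *v v = (\<chi> i. D$i$i * v$i)"
proof -
  assume "isdiag D"
  then have "\<And>i. (\<Sum>k\<in>UNIV. D$i$k * v$k) = (\<Sum>k\<in>UNIV. if k = i then D$i$i * v$i else 0)"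
    unfolding isdiag_def by (intro sum.cong) auto
  then show ?thesis by (simp add: vec_eq_iff mv_entry)
qed

lemma diag_vm: "isdiag D \<Longrightarrow> v v* D = (\<chi> i. v$i * D$i$i)"
proof -
  assume "isdiag D"
  then have "\<And>i. (\<Sum>k\<in>UNIV. v$k * D$k$i) = (\<Sum>k\<in>UNIV. if k = i then v$i * D$i$i else 0)"
    unfolding isdiag_def by (intro sum.cong) auto
  then show ?thesis by (simp add: vec_eq_iff vm_entry)
qed

lemma invertibleE:
  assumes "invertible (P::'a::comm_ring_1^'m^'m)"
  obtains Pi where "P ** Pi = mat 1" "Pi ** P = mat 1"
  using assms unfolding invertible_def by blast


lemma dvr_facts:
  assumes "is_dvr_uniformizer (\<pi>::'a::idom)"
  shows "\<pi> \<noteq> 0" "\<not> \<pi> dvd 1" "\<And>x. x \<noteq> 0 \<Longrightarrow> \<exists>u k. u dvd 1 \<and> x = u * \<pi> ^ k"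
  using assms unfolding is_dvr_uniformizer_def by auto

lemma unit_mult_dvd:
  assumes "u dvd (1::'a::comm_ring_1)" shows "u * x dvd x"
proof -
  obtain w where w: "1 = u * w" using assms by (rule dvdE)
  have "x = (u * x) * w" by (metis w mult.assoc mult.commute mult_1_right)
  then show ?thesis by (rule dvdI)
qed

lemma dvr_total:
  fixes a b :: "'a::idom"
  assumes "is_dvr_uniformizer (\<pi>::'a::idom)"
  shows "a dvd b \<or> b dvd a"
proof (cases "a = 0 \<or> b = 0")
  case True then show ?thesis by auto
next
  case False
  then obtain u k v m where uv: "u dvd 1" "a = u * \<pi>^k" "v dvd 1" "b = v * \<pi>^m"
    using dvr_facts[OF assms] by metis
  show ?thesis
  proof (cases "k \<le> m")
    case True
    have "a dvd u * \<pi>^m" using True uv(2) by (simp add: le_imp_power_dvd)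
    also have "u * \<pi>^m dvd \<pi>^m" using uv(1) by (rule unit_mult_dvd)
    also have "\<pi>^m dvd b" using uv(4) by simp
    finally show ?thesis by simp
  next
    case False
    have "b dvd v * \<pi>^k" using False uv(4) by (simp add: le_imp_power_dvd)
    also have "v * \<pi>^k dvd \<pi>^k" using uv(3) by (rule unit_mult_dvd)
    also have "\<pi>^k dvd a" using uv(2) by simp
    finally show ?thesis by simp
  qed
qed

lemma dvr_prime:
  assumes "is_dvr_uniformizer (\<pi>::'a::idom)" "\<pi> dvd a * b"
  shows "\<pi> dvd a \<or> \<pi> dvd b"
proof (cases "a = 0 \<or> b = 0")
  case True then show ?thesis by auto
next
  case False
  then obtain u k v m where uv: "u dvd 1" "a = u * \<pi>^k" "v dvd 1" "b = v * \<pi>^m"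
    using dvr_facts[OF assms(1)] by metis
  show ?thesis
  proof (cases "k = 0 \<and> m = 0")
    case True
    have "u * v dvd 1 * 1" using uv(1,3) by (rule mult_dvd_mono)
    then have "a * b dvd 1" using uv True by simp
    then have "\<pi> dvd 1" using assms(2) dvd_trans by blast
    then show ?thesis using dvr_facts[OF assms(1)] by simp
  next
    case False
    then have "k \<noteq> 0 \<or> m \<noteq> 0" by simp
    then show ?thesis
    proof
      assume "k \<noteq> 0"
      then have "\<pi> dvd \<pi>^k" by (intro dvd_power) simp
      then show ?thesis using uv(2) by (simp add: dvd_mult)
    next
      assume "m \<noteq> 0"
      then have "\<pi> dvd \<pi>^m" by (intro dvd_power) simp
      then show ?thesis using uv(4) by (simp add: dvd_mult)
    qed
  qed
qed

lemma dvr_unit_not: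
  assumes "is_dvr_uniformizer (\<pi>::'a::idom)" "u dvd 1"
  shows "\<not> \<pi> dvd u"
  using assms dvr_facts(2)[OF assms(1)] dvd_trans by blast

lemma dvr_small:
  assumes "is_dvr_uniformizer (\<pi>::'a::idom)" "\<not> \<pi>^r dvd d"
  shows "\<exists>c a. c dvd 1 \<and> d = c * \<pi>^a \<and> a < r"
proof -
  have "d \<noteq> 0" using assms(2) by auto
  then obtain c a where ca: "c dvd 1" "d = c * \<pi>^a" using dvr_facts[OF assms(1)] by metis
  have "a < r"
  proof (rule ccontr)
    assume "\<not> a < r"
    then have "\<pi>^r dvd \<pi>^a" by (simp add: le_imp_power_dvd)
    then have "\<pi>^r dvd d" using ca(2) by simp
    then show False using assms(2) by simp
  qed
  then show ?thesis using ca by blast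
qed

lemma dvr_cancel:
  assumes "is_dvr_uniformizer (\<pi>::'a::idom)" "c dvd 1" "a < r" "\<pi>^r dvd (c * \<pi>^a) * h"
  shows "\<pi> dvd h"
proof -
  have ne: "\<pi>^a \<noteq> 0" using dvr_facts(1)[OF assms(1)] by simp
  have "\<pi>^r = \<pi>^a * \<pi>^(r-a)" using assms(3) by (simp add: power_add[symmetric])
  moreover have "(c * \<pi>^a) * h = \<pi>^a * (c * h)" by (simp add: mult_ac)
  ultimately have "\<pi>^(r-a) dvd c * h" using assms(4) ne dvr_facts(1)[OF assms(1)] by simp
  moreover have "\<pi> dvd \<pi>^(r-a)" by (rule dvd_power) (use assms(3) in simp)
  ultimately have "\<pi> dvd c * h" using dvd_trans by blast
  then have "\<pi> dvd c \<or> \<pi> dvd h" by (rule dvr_prime[OF assms(1)])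
  then show ?thesis using dvr_unit_not[OF assms(1,2)] by blast
qed

lemma dvr_quot:
  assumes "is_dvr_uniformizer (\<pi>::'a::idom)" "\<not> \<pi>^r dvd d"
  shows "\<exists>e. d * e = \<pi>^(r-1)"
proof -
  obtain c a where ca: "c dvd 1" "d = c * \<pi>^a" "a < r" using dvr_small[OF assms] by blast
  obtain c' where c': "c * c' = 1" using ca(1) by (metis dvdE)
  have pw: "\<pi>^a * \<pi>^(r-1-a) = \<pi>^(r-1)" using ca(3) by (simp add: power_add[symmetric])
  have "d * (c' * \<pi>^(r-1-a)) = (c * c') * (\<pi>^a * \<pi>^(r-1-a))"
    unfolding ca(2) by (simp only: mult.assoc mult.left_commute)
  also have "\<dots> = \<pi>^(r-1)" by (simp only: c' pw mult_1_left)
  finally have "d * (c' * \<pi>^(r-1-a)) = \<pi>^(r-1)" .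
  then show ?thesis by blast
qed


lemma ker_transpose:
  fixes M :: "'a::idom^'m::finite^'m" and u :: "'a^'m"
  assumes dvr: "is_dvr_uniformizer \<pi>" and hM: "vdvd \<pi> (M *v u)" and hu: "\<not> vdvd \<pi> u"
  shows "\<exists>x. \<not> vdvd \<pi> x \<and> vdvd \<pi> (x v* M)"
proof -
  obtain P Q D :: "'a^'m^'m" where PQD: "invertible P" "invertible Q" "isdiag D" "M = P ** D ** Q"
    using smith[OF dvr_total[OF dvr]] by blast
  obtain Pi where Pi: "P ** Pi = mat 1" "Pi ** P = mat 1" using invertibleE[OF PQD(1)] by blast
  obtain Qi where Qi: "Q ** Qi = mat 1" "Qi ** Q = mat 1" using invertibleE[OF PQD(2)] by blast
  define q where "q = Q *v u"
  have PiM: "Pi ** M = D ** Q" by (simp add: PQD(4) matrix_mul_assoc Pi(2))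
  have "Pi *v (M *v u) = D *v q"
    by (simp add: q_def matrix_vector_mul_assoc PiM)
  then have Dq: "vdvd \<pi> (D *v q)" using vdvd_mv[OF hM, of Pi] by simp
  have "\<not> vdvd \<pi> q"
  proof
    assume "vdvd \<pi> q"
    then have "vdvd \<pi> (Qi *v q)" by (rule vdvd_mv)
    moreover have "Qi *v q = u" by (simp add: q_def matrix_vector_mul_assoc Qi(2))
    ultimately show False using hu by simp
  qed
  then obtain k where k: "\<not> \<pi> dvd q$k" unfolding vdvd_def by auto
  have "(D *v q)$k = D$k$k * q$k" using diag_mv[OF PQD(3)] by simp
  then have "\<pi> dvd D$k$k * q$k" using Dq unfolding vdvd_def by metis
  then have dk: "\<pi> dvd D$k$k" using dvr_prime[OF dvr] k by blast
  define x where "x = axis k 1 v* Pi"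
  have "x v* M = axis k 1 v* D v* Q"
    by (simp add: x_def vector_matrix_mul_assoc PQD(4) matrix_mul_assoc Pi(2))
  also have "axis k 1 v* D = D$k$k *s axis k 1"
    using diag_vm[OF PQD(3)] by (simp add: vec_eq_iff axis_def)
  finally have "x v* M = D$k$k *s (axis k 1 v* Q)" by (simp add: vm_smult)
  then have "vdvd \<pi> (x v* M)" using dk by (simp add: vdvd_smult)
  moreover have "\<not> vdvd \<pi> x"
  proof
    assume "vdvd \<pi> x"
    then have "vdvd \<pi> (x v* P)" by (rule vdvd_vm)
    moreover have "x v* P = axis k 1" by (simp add: x_def vector_matrix_mul_assoc Pi(2))
    ultimately have "\<pi> dvd (axis k 1 :: 'a^'m)$k" unfolding vdvd_def by metis
    then have "\<pi> dvd 1" by simp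
    then show False using dvr_facts(2)[OF dvr] by simp
  qed
  ultimately show ?thesis by blast
qed


lemma abstract_key:
  fixes \<pi> :: "'a::idom" and A G :: "'a^'m::finite^'m" and T :: "'a^'m"
  assumes dvr: "is_dvr_uniformizer \<pi>"
    and sym: "\<And>x y. dotp x (G *v y) = dotp y (G *v x)"
    and skew: "\<And>x y. dotp (A *v x) (G *v y) = - dotp x (G *v (A *v y))"
    and nondeg: "\<And>y. vdvd \<pi> (G *v y) \<Longrightarrow> vdvd \<pi> y"
    and r: "r \<ge> 1"
    and hT: "\<And>Z. vdvd (\<pi>^r) (A *v Z) \<Longrightarrow> \<pi> dvd dotp T (G *v Z)"
  shows "\<exists>W. vdvd (\<pi>^r) (A *v W - \<pi>^(r-1) *s T)"
proof -
  obtain P Q D :: "'a^'m^'m" where PQD: "invertible P" "invertible Q" "isdiag D" "A = P ** D ** Q"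
    using smith[OF dvr_total[OF dvr]] by blast
  obtain Pi where Pi: "P ** Pi = mat 1" "Pi ** P = mat 1" using invertibleE[OF PQD(1)] by blast
  obtain Qi where Qi: "Q ** Qi = mat 1" "Qi ** Q = mat 1" using invertibleE[OF PQD(2)] by blast
  define d where "d i = D$i$i" for i
  define w where "w i = Qi *v axis i 1" for i
  define v where "v j = P *v axis j 1" for j
  have AQi: "A ** Qi = P ** D" by (simp add: PQD(4) matrix_mul_assoc[symmetric] Qi(1))
  have Dax: "D *v axis i 1 = d i *s axis i 1" for i
    using diag_mv[OF PQD(3)] by (simp add: vec_eq_iff axis_def d_def)
  have Aw: "A *v w i = d i *s v i" for i
  proof -
    have "A *v w i = P *v (D *v axis i 1)"
      by (simp add: w_def matrix_vector_mul_assoc AQi)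
    then show ?thesis by (simp add: Dax v_def mv_smult)
  qed
  define S where "S = {i. \<not> \<pi>^r dvd d i}"
  have "\<forall>i\<in>S. \<exists>e. d i * e = \<pi>^(r-1)" using dvr_quot[OF dvr] unfolding S_def by auto
  then obtain e where e: "\<forall>i\<in>S. d i * e i = \<pi>^(r-1)" by (metis bchoice)
  define u where "u = Pi *v T"
  have Tu: "T = P *v u" by (simp add: u_def matrix_vector_mul_assoc Pi(1))
  define W where "W = Qi *v (\<chi> i. if i \<in> S then u$i * e i else 0)"
  have DW: "D *v (\<chi> i. if i \<in> S then u$i * e i else 0) = (\<chi> i. if i \<in> S then \<pi>^(r-1) * u$i else 0)"
    using diag_mv[OF PQD(3)] e by (auto simp: vec_eq_iff d_def mult_ac)
  have AW: "A *v W = P *v (\<chi> i. if i \<in> S then \<pi>^(r-1) * u$i else 0)"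
    by (simp add: W_def matrix_vector_mul_assoc AQi DW[symmetric])
  have key: "\<forall>k. k \<notin> S \<longrightarrow> \<pi> dvd u$k"
  proof (rule ccontr)
    assume "\<not> (\<forall>k. k \<notin> S \<longrightarrow> \<pi> dvd u$k)"
    then obtain k where k: "k \<notin> S" "\<not> \<pi> dvd u$k" by auto
    define H where "H = (\<chi> i j. dotp (w i) (G *v v j))"
    have expandP: "dotp x (G *v (P *v y)) = dotp (\<chi> j. dotp x (G *v v j)) y" for x y
    proof -
      have "dotp x (G *v (P *v y)) = dotp x ((G ** P) *v y)" by (simp add: matrix_vector_mul_assoc)
      also have "\<dots> = dotp (\<chi> j. dotp x ((G ** P) *v axis j 1)) y" by (rule dotp_expand_r)
      also have "(\<chi> j. dotp x ((G ** P) *v axis j 1)) = (\<chi> j. dotp x (G *v v j))"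
        by (simp add: v_def matrix_vector_mul_assoc)
      finally show ?thesis .
    qed
    have expandQ: "dotp (Qi *v y) z = dotp y (\<chi> i. dotp (w i) z)" for y z
      unfolding w_def by (rule dotp_expand_l)
    have Hrow: "dotp (\<chi> j. H$i$j) y = (H *v y)$i" for i y
      by (simp add: dotp_def mv_entry)
    have ha: "\<pi> dvd (H *v u)$i" if iS: "i \<notin> S" for i
    proof -
      have "\<pi>^r dvd d i" using iS unfolding S_def by simp
      then have "vdvd (\<pi>^r) (A *v w i)" by (simp add: Aw vdvd_smult)
      then have "\<pi> dvd dotp T (G *v w i)" by (rule hT)
      also have "dotp T (G *v w i) = dotp (w i) (G *v (P *v u))" by (simp add: sym Tu)
      also have "\<dots> = dotp (\<chi> j. H$i$j) u" by (simp only: expandP H_def vec_lambda_beta)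
      also have "\<dots> = (H *v u)$i" by (rule Hrow)
      finally show ?thesis .
    qed
    have hb: "\<pi> dvd H$i$j" if iS: "i \<notin> S" and jS: "j \<in> S" for i j
    proof -
      have "dotp (A *v w j) (G *v w i) = - dotp (w j) (G *v (A *v w i))" by (rule skew)
      moreover have "dotp (A *v w j) (G *v w i) = d j * H$i$j"
        by (simp add: Aw dotp_smult_l H_def sym[of "v j"])
      moreover have "dotp (w j) (G *v (A *v w i)) = d i * dotp (w j) (G *v v i)"
        by (simp add: Aw mv_smult dotp_smult_r)
      ultimately have eq: "d j * H$i$j = - (d i * dotp (w j) (G *v v i))" by simp
      have "\<pi>^r dvd d i" using iS unfolding S_def by simp
      then have "\<pi>^r dvd d j * H$i$j" unfolding eq by simp
      moreover obtain c a where ca: "c dvd 1" "d j = c * \<pi>^a" "a < r"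
        using dvr_small[OF dvr] jS unfolding S_def by blast
      ultimately show ?thesis using dvr_cancel[OF dvr ca(1) ca(3)] by (simp add: ca(2))
    qed
    define u' where "u' = (\<chi> j. if j \<notin> S then u$j else 0)"
    define M where "M = (\<chi> i j. if i \<notin> S \<and> j \<notin> S then H$i$j else if i = j then 1 else 0)"
    have hMu: "vdvd \<pi> (M *v u')"
      unfolding vdvd_def
    proof
      fix i
      show "\<pi> dvd (M *v u')$i"
      proof (cases "i \<in> S")
        case True
        have "(M *v u')$i = (\<Sum>j\<in>UNIV. (if i = j then 1 else 0) * u'$j)"
          unfolding mv_entry using True by (intro sum.cong) (auto simp: M_def)
        also have "\<dots> = u'$i" by (rule sum_delta_l)
        finally show ?thesis using True by (simp add: u'_def)
      next
        case False
        have "(H *v u)$i = (\<Sum>j\<in>UNIV. (if j \<notin> S then H$i$j * u$j else 0) + (if j \<in> S then H$i$j * u$j else 0))"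
          unfolding mv_entry by (intro sum.cong) auto
        also have "\<dots> = (\<Sum>j\<in>UNIV. M$i$j * u'$j) + (\<Sum>j\<in>UNIV. if j \<in> S then H$i$j * u$j else 0)"
          unfolding sum.distrib using False by (intro arg_cong2[where f="(+)"] sum.cong) (auto simp: M_def u'_def)
        finally have "(M *v u')$i = (H *v u)$i - (\<Sum>j\<in>UNIV. if j \<in> S then H$i$j * u$j else 0)"
          by (simp add: mv_entry)
        moreover have "\<pi> dvd (\<Sum>j\<in>UNIV. if j \<in> S then H$i$j * u$j else 0)"
          using hb[OF False] by (intro dvd_sum) auto
        ultimately show ?thesis using ha[OF False] by simp
      qed
    qed
    have hu': "\<not> vdvd \<pi> u'"
    proof
      assume "vdvd \<pi> u'"
      then have "\<pi> dvd u'$k" unfolding vdvd_def by metis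
      then show False using k by (simp add: u'_def)
    qed
    obtain x where x: "\<not> vdvd \<pi> x" "vdvd \<pi> (x v* M)"
      using ker_transpose[OF dvr hMu hu'] by metis
    have xS: "\<pi> dvd x$i" if iS: "i \<in> S" for i
    proof -
      have "(x v* M)$i = (\<Sum>j\<in>UNIV. x$j * (if j = i then 1 else 0))"
        unfolding vm_entry using iS by (intro sum.cong) (auto simp: M_def)
      also have "\<dots> = x$i" by (rule sum_delta_r)
      finally show ?thesis using x(2) unfolding vdvd_def by metis
    qed
    define x' where "x' = (\<chi> i. if i \<notin> S then x$i else 0)"
    have hx': "\<not> vdvd \<pi> x'"
    proof
      assume h: "vdvd \<pi> x'"
      have "\<pi> dvd x$i" for i
      proof (cases "i \<in> S")
        case True then show ?thesis by (rule xS)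
      next
        case False
        have "\<pi> dvd x'$i" using h unfolding vdvd_def by simp
        then show ?thesis using False by (simp add: x'_def)
      qed
      then have "vdvd \<pi> x" unfolding vdvd_def by simp
      then show False using x(1) by simp
    qed
    have hxH: "\<pi> dvd (x' v* H)$j" for j
    proof (cases "j \<in> S")
      case True
      show ?thesis unfolding vm_entry
        using hb True by (intro dvd_sum) (auto simp: x'_def)
    next
      case False
      have "(x' v* H)$j = (x v* M)$j"
        unfolding vm_entry using False by (intro sum.cong) (auto simp: x'_def M_def)
      then show ?thesis using x(2) unfolding vdvd_def by metis
    qed
    define y where "y = Qi *v x'"
    have hy: "\<pi> dvd dotp y (G *v z)" for z
    proof -
      have "z = P *v (Pi *v z)" by (simp add: matrix_vector_mul_assoc Pi(1))
      then have "dotp y (G *v z) = dotp (\<chi> j. dotp y (G *v v j)) (Pi *v z)"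
        using expandP by metis
      moreover have "dotp y (G *v v j) = (x' v* H)$j" for j
      proof -
        have "dotp y (G *v v j) = dotp x' (\<chi> i. dotp (w i) (G *v v j))"
          unfolding y_def by (rule expandQ)
        also have "\<dots> = (x' v* H)$j" by (simp add: H_def dotp_def vm_entry)
        finally show ?thesis .
      qed
      ultimately show ?thesis using hxH by (simp add: dotp_dvd)
    qed
    have "vdvd \<pi> (G *v y)"
      unfolding vdvd_def
    proof
      fix a
      have "(G *v y)$a = dotp y (G *v axis a 1)" by (simp add: dotp_axis_l[symmetric] sym)
      then show "\<pi> dvd (G *v y)$a" using hy by simp
    qed
    then have "vdvd \<pi> y" by (rule nondeg)
    then have "vdvd \<pi> (Q *v y)" by (rule vdvd_mv)
    moreover have "Q *v y = x'" by (simp add: y_def matrix_vector_mul_assoc Qi(1))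
    ultimately show False using hx' by simp
  qed
  have eqn: "A *v W - \<pi>^(r-1) *s T = P *v ((\<chi> i. if i \<in> S then \<pi>^(r-1) * u$i else 0) - \<pi>^(r-1) *s u)"
    by (simp add: AW Tu mv_smult mv_diff)
  have vd: "vdvd (\<pi>^r) ((\<chi> i. if i \<in> S then \<pi>^(r-1) * u$i else 0) - \<pi>^(r-1) *s u)"
    unfolding vdvd_def
  proof
    fix i
    show "\<pi>^r dvd ((\<chi> i. if i \<in> S then \<pi>^(r-1) * u$i else 0) - \<pi>^(r-1) *s u)$i"
    proof (cases "i \<in> S")
      case True then show ?thesis by simp
    next
      case False
      then have "\<pi> dvd u$i" using key by simp
      then have "\<pi>^(r-1) * \<pi> dvd \<pi>^(r-1) * u$i" by (rule mult_dvd_mono[OF dvd_refl])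
      moreover have pw: "\<pi>^(r-1) * \<pi> = \<pi>^r" using r by (cases r) simp_all
      ultimately have "\<pi>^r dvd \<pi>^(r-1) * u$i" by (simp only: pw)
      then show ?thesis using False by simp
    qed
  qed
  have "vdvd (\<pi>^r) (A *v W - \<pi>^(r-1) *s T)" unfolding eqn by (rule vdvd_mv[OF vd])
  then show ?thesis by blast
qed


definition mdvd :: "'a::comm_ring_1 \<Rightarrow> 'a^'n^'n \<Rightarrow> bool" where
  "mdvd m X \<longleftrightarrow> (\<forall>i j. m dvd X$i$j)"

lemma mat_cong_mdvd: "mat_cong \<pi> k X Y \<longleftrightarrow> mdvd (\<pi>^k) (X - Y)"
  unfolding mat_cong_def mdvd_def by simp

lemma mat_cong_0: "mat_cong \<pi> k X 0 \<longleftrightarrow> mdvd (\<pi>^k) X"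
  unfolding mat_cong_def mdvd_def by simp

lemma smat_entry [simp]: "smat c X $ i $ j = c * X$i$j"
  by (simp add: smat_def)

lemma mdvd_add: "mdvd m X \<Longrightarrow> mdvd m Y \<Longrightarrow> mdvd m (X + Y)"
  unfolding mdvd_def by simp
lemma mdvd_diff: "mdvd m X \<Longrightarrow> mdvd m Y \<Longrightarrow> mdvd m (X - Y)"
  unfolding mdvd_def by simp
lemma mdvd_neg: "mdvd m X \<Longrightarrow> mdvd m (- X)"
  unfolding mdvd_def by simp
lemma mdvd_smat: "m dvd c \<Longrightarrow> mdvd m (smat c X)"
  unfolding mdvd_def by simp
lemma mdvd_smat2: "mdvd m X \<Longrightarrow> mdvd m (smat c X)"
  unfolding mdvd_def by simp
lemma mdvd_mono: "m dvd m' \<Longrightarrow> mdvd m' X \<Longrightarrow> mdvd m X"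
  unfolding mdvd_def by (meson dvd_trans)
lemma mdvd_zero: "mdvd m 0"
  unfolding mdvd_def by simp

lemma mdvd_mm_l: "mdvd m X \<Longrightarrow> mdvd m ((X::'a::comm_ring_1^'n^'n) ** Y)"
  unfolding mdvd_def by (auto simp: mm_entry intro!: dvd_sum dvd_mult2)
lemma mdvd_mm_r: "mdvd m Y \<Longrightarrow> mdvd m ((X::'a::comm_ring_1^'n^'n) ** Y)"
  unfolding mdvd_def by (auto simp: mm_entry intro!: dvd_sum dvd_mult)

lemma mdvd_bracket_l: "mdvd m X \<Longrightarrow> mdvd m (bracket X Y)"
  unfolding bracket_def by (intro mdvd_diff mdvd_mm_l mdvd_mm_r)
lemma mdvd_bracket_r: "mdvd m Y \<Longrightarrow> mdvd m (bracket X Y)"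
  unfolding bracket_def by (intro mdvd_diff mdvd_mm_l mdvd_mm_r)

lemma smat_mm_l: "smat c X ** Y = smat c ((X::'a::comm_ring_1^'n^'n) ** Y)"
  by (simp add: vec_eq_iff mm_entry sum_distrib_left mult_ac)
lemma smat_mm_r: "X ** smat c Y = smat c ((X::'a::comm_ring_1^'n^'n) ** Y)"
  by (simp add: vec_eq_iff mm_entry sum_distrib_left mult_ac)
lemma smat_diff: "smat c X - smat c Y = smat c ((X::'a::comm_ring_1^'n^'n) - Y)"
  by (simp add: vec_eq_iff right_diff_distrib)
lemma smat_add: "smat c X + smat c Y = smat c ((X::'a::comm_ring_1^'n^'n) + Y)"
  by (simp add: vec_eq_iff distrib_left)
lemma smat_smat: "smat a (smat b X) = smat (a * b) (X::'a::comm_ring_1^'n^'n)"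
  by (simp add: vec_eq_iff mult_ac)

lemma bracket_add_l: "bracket (X + Y) Z = bracket X Z + bracket (Y::'a::comm_ring_1^'n^'n) Z"
  unfolding bracket_def by (simp add: mm_add_r matrix_add_ldistrib)
lemma bracket_add_r: "bracket X (Y + Z) = bracket X Y + bracket X (Z::'a::comm_ring_1^'n^'n)"
  unfolding bracket_def by (simp add: mm_add_r matrix_add_ldistrib)
lemma bracket_diff_l: "bracket (X - Y) Z = bracket X Z - bracket (Y::'a::comm_ring_1^'n^'n) Z"
  unfolding bracket_def by (simp add: mm_diff_r mm_diff_l)
lemma bracket_diff_r: "bracket X (Y - Z) = bracket X Y - bracket X (Z::'a::comm_ring_1^'n^'n)"
  unfolding bracket_def by (simp add: mm_diff_r mm_diff_l)
lemma bracket_smat_l: "bracket (smat c X) Y = smat c (bracket X (Y::'a::comm_ring_1^'n^'n))"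
  unfolding bracket_def by (simp add: smat_mm_l smat_mm_r smat_diff)
lemma bracket_smat_r: "bracket X (smat c Y) = smat c (bracket X (Y::'a::comm_ring_1^'n^'n))"
  unfolding bracket_def by (simp add: smat_mm_l smat_mm_r smat_diff)
lemma bracket_antisym: "bracket X Y = - bracket Y (X::'a::comm_ring_1^'n^'n)"
  unfolding bracket_def by simp

lemma sl_iff: "X \<in> sl \<longleftrightarrow> trace X = 0" by (simp add: sl_def)
lemma sl_add: "X \<in> sl \<Longrightarrow> Y \<in> sl \<Longrightarrow> (X::'a::comm_ring_1^'n^'n) + Y \<in> sl"
  by (simp add: sl_iff trace_add)
lemma sl_diff: "X \<in> sl \<Longrightarrow> Y \<in> sl \<Longrightarrow> (X::'a::comm_ring_1^'n^'n) - Y \<in> sl"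
  by (simp add: sl_iff trace_sub)
lemma sl_smat: "X \<in> sl \<Longrightarrow> smat c (X::'a::comm_ring_1^'n^'n) \<in> sl"
proof -
  have "trace (smat c X) = c * trace X" by (simp add: trace_def sum_distrib_left)
  then show "X \<in> sl \<Longrightarrow> smat c X \<in> sl" by (simp add: sl_iff)
qed
lemma sl_zero: "(0::'a::comm_ring_1^'n^'n) \<in> sl"
  by (simp add: sl_iff trace_def)
lemma sl_neg: "X \<in> sl \<Longrightarrow> - (X::'a::comm_ring_1^'n^'n) \<in> sl"
proof -
  assume "X \<in> sl"
  then have "0 - X \<in> sl" by (rule sl_diff[OF sl_zero])
  then show ?thesis by simp
qed
lemma sl_bracket: "bracket X (Y::'a::comm_ring_1^'n^'n) \<in> sl"
  unfolding sl_iff bracket_def trace_sub using trace_mul_sym[of X Y] by simp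


context
  fixes \<pi> :: "'a::idom" and \<kappa> :: "'a^'n::finite^'n \<Rightarrow> 'a^'n^'n \<Rightarrow> 'a"
  assumes gf: "good_form \<pi> \<kappa>"
begin

lemma K_add: "X \<in> sl \<Longrightarrow> Y \<in> sl \<Longrightarrow> Z \<in> sl \<Longrightarrow> \<kappa> (X + Y) Z = \<kappa> X Z + \<kappa> Y Z"
  using gf unfolding good_form_def by blast
lemma K_sm: "X \<in> sl \<Longrightarrow> Z \<in> sl \<Longrightarrow> \<kappa> (smat a X) Z = a * \<kappa> X Z"
  using gf unfolding good_form_def by blast
lemma K_sym: "X \<in> sl \<Longrightarrow> Y \<in> sl \<Longrightarrow> \<kappa> X Y = \<kappa> Y X"
  using gf unfolding good_form_def by blast
lemma K_inv: "X \<in> sl \<Longrightarrow> Y \<in> sl \<Longrightarrow> Z \<in> sl \<Longrightarrow> \<kappa> (bracket X Y) Z = \<kappa> X (bracket Y Z)"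
  using gf unfolding good_form_def by blast
lemma K_nd: "X \<in> sl \<Longrightarrow> (\<And>Y. Y \<in> sl \<Longrightarrow> \<pi> dvd \<kappa> X Y) \<Longrightarrow> mat_cong \<pi> 1 X 0"
  using gf unfolding good_form_def by blast

lemma K_add_r: "X \<in> sl \<Longrightarrow> Y \<in> sl \<Longrightarrow> Z \<in> sl \<Longrightarrow> \<kappa> Z (X + Y) = \<kappa> Z X + \<kappa> Z Y"
proof -
  assume h: "X \<in> sl" "Y \<in> sl" "Z \<in> sl"
  have "\<kappa> Z (X + Y) = \<kappa> (X + Y) Z" by (rule K_sym[OF h(3) sl_add[OF h(1,2)]])
  also have "\<dots> = \<kappa> X Z + \<kappa> Y Z" by (rule K_add[OF h])
  also have "\<dots> = \<kappa> Z X + \<kappa> Z Y" by (simp only: K_sym[OF h(1) h(3)] K_sym[OF h(2) h(3)])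
  finally show ?thesis .
qed
lemma K_sm_r: "X \<in> sl \<Longrightarrow> Z \<in> sl \<Longrightarrow> \<kappa> Z (smat a X) = a * \<kappa> Z X"
  by (simp add: K_sym[of Z] K_sm sl_smat)
lemma K_zero_l: "Z \<in> sl \<Longrightarrow> \<kappa> 0 Z = 0"
proof -
  assume Z: "Z \<in> sl"
  have "smat 0 (0::'a^'n^'n) = 0" by (simp add: vec_eq_iff)
  then show ?thesis using K_sm[OF sl_zero Z, of 0] by simp
qed
lemma K_zero_r: "Z \<in> sl \<Longrightarrow> \<kappa> Z 0 = 0"
  using K_zero_l K_sym sl_zero by metis
lemma K_diff_l: "X \<in> sl \<Longrightarrow> Y \<in> sl \<Longrightarrow> Z \<in> sl \<Longrightarrow> \<kappa> (X - Y) Z = \<kappa> X Z - \<kappa> Y Z"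
proof -
  assume h: "X \<in> sl" "Y \<in> sl" "Z \<in> sl"
  have "\<kappa> X Z = \<kappa> ((X - Y) + Y) Z" by simp
  also have "\<dots> = \<kappa> (X - Y) Z + \<kappa> Y Z" using h by (intro K_add sl_diff)
  finally show ?thesis by simp
qed
lemma K_diff_r: "X \<in> sl \<Longrightarrow> Y \<in> sl \<Longrightarrow> Z \<in> sl \<Longrightarrow> \<kappa> Z (X - Y) = \<kappa> Z X - \<kappa> Z Y"
proof -
  assume h: "X \<in> sl" "Y \<in> sl" "Z \<in> sl"
  have "\<kappa> Z (X - Y) = \<kappa> (X - Y) Z" by (rule K_sym[OF h(3) sl_diff[OF h(1,2)]])
  also have "\<dots> = \<kappa> X Z - \<kappa> Y Z" by (rule K_diff_l[OF h])
  also have "\<dots> = \<kappa> Z X - \<kappa> Z Y" by (simp only: K_sym[OF h(1) h(3)] K_sym[OF h(2) h(3)])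
  finally show ?thesis .
qed
lemma K_neg_r: "X \<in> sl \<Longrightarrow> Z \<in> sl \<Longrightarrow> \<kappa> Z (- X) = - \<kappa> Z X"
  using K_diff_r[OF sl_zero, of X Z] K_zero_r by simp

lemma sl_div:
  fixes m :: 'a and X :: "'a^'n^'n"
  assumes "m \<noteq> 0" "X \<in> sl" "mdvd m X"
  shows "\<exists>M\<in>sl. X = smat m M"
proof -
  define M where "M = (\<chi> i j. SOME c. X$i$j = m * c)"
  have "X$i$j = m * M$i$j" for i j
    unfolding M_def using assms(3) unfolding mdvd_def
    by simp (metis (mono_tags) dvdE someI_ex)
  then have XM: "X = smat m M" by (simp add: vec_eq_iff)
  have "trace X = m * trace M" unfolding XM by (simp add: trace_def sum_distrib_left)
  then have "m * trace M = 0" using assms(2) by (simp add: sl_iff)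
  then have "trace M = 0" using assms(1) by simp
  then show ?thesis using XM by (auto simp: sl_iff)
qed

lemma K_mdvd_l:
  fixes m :: 'a
  assumes "m \<noteq> 0" "X \<in> sl" "Z \<in> sl" "mdvd m X"
  shows "m dvd \<kappa> X Z"
proof -
  obtain M where "M \<in> sl" "X = smat m M" using sl_div[OF assms(1,2,4)] by blast
  then show ?thesis using K_sm assms(3) by simp
qed

lemma K_mdvd_r:
  fixes m :: 'a
  assumes "m \<noteq> 0" "X \<in> sl" "Z \<in> sl" "mdvd m X"
  shows "m dvd \<kappa> Z X"
  using K_mdvd_l[OF assms] K_sym assms(2,3) by metis

end

definition coord :: "'a::comm_ring_1^'n::finite^'n \<Rightarrow> 'a^('n \<times> 'n)" where
  "coord X = (\<chi> p. if p = (undefined, undefined) then 0 else X $ fst p $ snd p)"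

definition uncoord :: "'a::comm_ring_1^('n::finite \<times> 'n) \<Rightarrow> 'a^'n^'n" where
  "uncoord v = (\<chi> i j. if i = undefined \<and> j = undefined then - (\<Sum>k\<in>UNIV - {undefined}. v $ (k,k)) else v $ (i,j))"

lemma coord_entry: "coord X $ (i,j) = (if i = undefined \<and> j = undefined then 0 else X$i$j)"
  unfolding coord_def by auto

lemma uncoord_entry: "uncoord v $ i $ j = (if i = undefined \<and> j = undefined then - (\<Sum>k\<in>UNIV - {undefined}. v $ (k,k)) else v $ (i,j))"
  unfolding uncoord_def by simp

lemma trace_split: "trace (X::'a::comm_ring_1^'n::finite^'n) = X$undefined$undefined + (\<Sum>k\<in>UNIV - {undefined}. X$k$k)"
  unfolding trace_def by (simp add: sum.remove[of UNIV undefined])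

lemma uncoord_sl: "uncoord v \<in> sl"
proof -
  have "(\<Sum>k\<in>UNIV - {undefined}. uncoord v $ k $ k) = (\<Sum>k\<in>UNIV - {undefined}. v $ (k,k))"
    by (intro sum.cong) (auto simp: uncoord_entry)
  then show ?thesis unfolding sl_iff trace_split by (simp add: uncoord_entry)
qed

lemma uncoord_coord: "X \<in> sl \<Longrightarrow> uncoord (coord X) = X"
proof -
  assume "X \<in> sl"
  then have t: "X$undefined$undefined + (\<Sum>k\<in>UNIV - {undefined}. X$k$k) = 0"
    unfolding sl_iff trace_split .
  have s: "(\<Sum>k\<in>UNIV - {undefined}. coord X $ (k,k)) = (\<Sum>k\<in>UNIV - {undefined}. X$k$k)"
    by (intro sum.cong) (auto simp: coord_entry)
  have "(\<Sum>k\<in>UNIV - {undefined}. X$k$k) + X$undefined$undefined = 0" using t by (simp add: add.commute)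
  then have t': "- (\<Sum>k\<in>UNIV - {undefined}. X$k$k) = X$undefined$undefined" by (rule minus_unique)
  have "uncoord (coord X) $ i $ j = X $ i $ j" for i j
    using t' s by (auto simp: uncoord_entry coord_entry)
  then show ?thesis by (simp add: vec_eq_iff)
qed

lemma coord_uu: "coord X $ (undefined, undefined) = 0"
  by (simp add: coord_entry)

lemma coord_add: "coord (X + Y) = coord X + coord Y"
  by (simp add: vec_eq_iff coord_def)
lemma coord_diff: "coord (X - Y) = coord X - coord Y"
  by (simp add: vec_eq_iff coord_def)
lemma coord_smat: "coord (smat c X) = c *s coord X"
  by (simp add: vec_eq_iff coord_def)

lemma uncoord_add: "uncoord (v + w) = uncoord v + uncoord w"
  by (simp add: vec_eq_iff uncoord_entry sum.distrib)
lemma uncoord_smult: "uncoord (c *s v) = smat c (uncoord v)"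
  by (simp add: vec_eq_iff uncoord_entry sum_distrib_left)
lemma uncoord_diff: "uncoord (v - w) = uncoord v - uncoord w"
  by (simp add: vec_eq_iff uncoord_entry sum_subtractf)

lemma uncoord_axis_uu: "uncoord (axis (undefined, undefined) 1) = (0::'a::comm_ring_1^'n::finite^'n)"
proof -
  have "(\<Sum>k\<in>UNIV - {undefined::'n}. (axis (undefined, undefined) 1 :: 'a^('n\<times>'n)) $ (k,k)) = 0"
    by (intro sum.neutral) (auto simp: axis_def)
  then show ?thesis by (auto simp: vec_eq_iff uncoord_entry axis_def)
qed

lemma mdvd_uncoord: "vdvd m v \<Longrightarrow> mdvd m (uncoord v)"
  unfolding vdvd_def mdvd_def by (auto simp: uncoord_entry intro!: dvd_sum)

lemma vdvd_coord: "mdvd m X \<Longrightarrow> vdvd m (coord X)"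
  unfolding vdvd_def mdvd_def by (simp add: coord_def)


lemma gram:
  fixes Bf :: "'a::comm_ring_1^'m::finite \<Rightarrow> 'a^'m \<Rightarrow> 'a"
  assumes addL: "\<And>x x' y. Bf (x + x') y = Bf x y + Bf x' y"
    and smL: "\<And>c x y. Bf (c *s x) y = c * Bf x y"
    and addR: "\<And>x y y'. Bf x (y + y') = Bf x y + Bf x y'"
    and smR: "\<And>c x y. Bf x (c *s y) = c * Bf x y"
  shows "Bf x y = dotp x ((\<chi> a b. Bf (axis a 1) (axis b 1)) *v y)"
proof -
  have zL: "Bf 0 y = 0" for y
  proof -
    have "Bf ((0::'a) *s 0) y = 0 * Bf 0 y" by (rule smL)
    then show ?thesis by simp
  qed
  have zR: "Bf x 0 = 0" for x
  proof -
    have "Bf x ((0::'a) *s 0) = 0 * Bf x 0" by (rule smR)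
    then show ?thesis by simp
  qed
  have sL: "Bf (\<Sum>a\<in>A. f a) y = (\<Sum>a\<in>A. Bf (f a) y)" if "finite A" for A f y
    using that by induct (simp_all add: zL addL)
  have sR: "Bf x (\<Sum>a\<in>A. f a) = (\<Sum>a\<in>A. Bf x (f a))" if "finite A" for A f x
    using that by induct (simp_all add: zR addR)
  have "Bf x y = Bf (\<Sum>a\<in>UNIV. x$a *s axis a 1) (\<Sum>b\<in>UNIV. y$b *s axis b 1)"
    by (simp add: basis_expansion)
  also have "\<dots> = (\<Sum>b\<in>UNIV. \<Sum>a\<in>UNIV. y$b * (x$a * Bf (axis a 1) (axis b 1)))"
    by (simp add: sL sR smL smR sum_distrib_left)
  also have "\<dots> = (\<Sum>a\<in>UNIV. \<Sum>b\<in>UNIV. y$b * (x$a * Bf (axis a 1) (axis b 1)))"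
    by (rule sum.swap)
  also have "\<dots> = (\<Sum>a\<in>UNIV. \<Sum>b\<in>UNIV. x$a * (y$b * Bf (axis a 1) (axis b 1)))"
    by (simp add: mult_ac)
  also have "\<dots> = dotp x ((\<chi> a b. Bf (axis a 1) (axis b 1)) *v y)"
    by (simp add: dotp_def mv_entry mult_ac sum_distrib_left)
  finally show ?thesis .
qed

lemma linmap:
  fixes F :: "'a::comm_ring_1^'m::finite \<Rightarrow> 'a^'m"
  assumes add: "\<And>x y. F (x + y) = F x + F y"
    and sm: "\<And>c x. F (c *s x) = c *s F x"
  shows "F y = (\<chi> i j. F (axis j 1) $ i) *v y"
proof -
  have z: "F 0 = 0"
  proof -
    have "F ((0::'a) *s 0) = 0 *s F 0" by (rule sm)
    then show ?thesis by simp
  qed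
  have s: "F (\<Sum>a\<in>A. f a) = (\<Sum>a\<in>A. F (f a))" if "finite A" for A f
    using that by induct (simp_all add: z add)
  have "F y = F (\<Sum>j\<in>UNIV. y$j *s axis j 1)" by (simp add: basis_expansion)
  also have "\<dots> = (\<Sum>j\<in>UNIV. y$j *s F (axis j 1))" by (simp add: s sm)
  also have "\<dots> = (\<chi> i j. F (axis j 1) $ i) *v y"
    by (simp add: vec_eq_iff mv_entry sum_component mult.commute)
  finally show ?thesis .
qed


lemma glue:
  fixes \<pi> :: "'a::idom" and \<kappa> :: "'a^'n::finite^'n \<Rightarrow> 'a^'n^'n \<Rightarrow> 'a" and B T :: "'a^'n^'n"
  assumes dvr: "is_dvr_uniformizer \<pi>" and gf: "good_form \<pi> \<kappa>" and r: "r \<ge> 1"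
    and B: "B \<in> sl" and T: "T \<in> sl"
    and hT: "\<And>Z. Z \<in> sl \<Longrightarrow> mdvd (\<pi>^r) (bracket B Z) \<Longrightarrow> \<pi> dvd \<kappa> T Z"
  shows "\<exists>W\<in>sl. mdvd (\<pi>^r) (bracket W B - smat (\<pi>^(r-1)) T)"
proof -
  note Kadd = K_add[OF gf] and Kadd_r = K_add_r[OF gf] and Ksm = K_sm[OF gf]
    and Ksm_r = K_sm_r[OF gf] and Ksym = K_sym[OF gf] and Kinv = K_inv[OF gf]
    and Knd = K_nd[OF gf] and Kneg_r = K_neg_r[OF gf] and Kzero_l = K_zero_l[OF gf]
  define kp where "kp v w = \<kappa> (uncoord v) (uncoord w) + v$(undefined,undefined) * w$(undefined,undefined)"
    for v w :: "'a^('n\<times>'n)"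
  define G where "G = (\<chi> a b. kp (axis a 1) (axis b 1))"
  define F where "F v = coord (bracket (uncoord v) B)" for v :: "'a^('n\<times>'n)"
  define A where "A = (\<chi> i j. F (axis j 1) $ i)"
  have kpG: "kp x y = dotp x (G *v y)" for x y
    unfolding G_def
    by (rule gram) (simp_all add: kp_def uncoord_add uncoord_smult Kadd Kadd_r Ksm Ksm_r uncoord_sl algebra_simps)
  have AF: "A *v y = F y" for y
    unfolding A_def
    by (rule linmap[symmetric]) (simp_all add: F_def uncoord_add uncoord_smult bracket_add_l bracket_smat_l coord_add coord_smat)
  have Fuu: "F v $ (undefined, undefined) = 0" for v by (simp add: F_def coord_uu)
  have uF: "uncoord (F v) = bracket (uncoord v) B" for v by (simp add: F_def uncoord_coord sl_bracket)
  have sym: "dotp x (G *v y) = dotp y (G *v x)" for x y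
    unfolding kpG[symmetric] kp_def using Ksym[OF uncoord_sl uncoord_sl] by (simp add: mult.commute)
  have skew: "dotp (A *v x) (G *v y) = - dotp x (G *v (A *v y))" for x y
  proof -
    have "dotp (A *v x) (G *v y) = \<kappa> (bracket (uncoord x) B) (uncoord y)"
      unfolding kpG[symmetric] kp_def AF by (simp add: uF Fuu)
    also have "\<dots> = \<kappa> (uncoord x) (bracket B (uncoord y))"
      by (rule Kinv[OF uncoord_sl B uncoord_sl])
    also have "bracket B (uncoord y) = - bracket (uncoord y) B" by (rule bracket_antisym)
    also have "\<kappa> (uncoord x) (- bracket (uncoord y) B) = - \<kappa> (uncoord x) (bracket (uncoord y) B)"
      by (rule Kneg_r[OF sl_bracket uncoord_sl])
    also have "\<kappa> (uncoord x) (bracket (uncoord y) B) = dotp x (G *v (A *v y))"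
      unfolding kpG[symmetric] kp_def AF by (simp add: uF Fuu)
    finally show ?thesis .
  qed
  have nondeg: "vdvd \<pi> y" if hy: "vdvd \<pi> (G *v y)" for y
  proof -
    have dk: "\<pi> dvd kp x y" for x
      unfolding kpG by (subst dotp_comm) (rule dotp_dvd, rule hy[unfolded vdvd_def, rule_format])
    define Y where "Y = uncoord y"
    have Ysl: "Y \<in> sl" unfolding Y_def by (rule uncoord_sl)
    have "\<pi> dvd \<kappa> Y X" if "X \<in> sl" for X
    proof -
      have "kp (coord X) y = \<kappa> X Y" unfolding kp_def Y_def by (simp add: uncoord_coord that coord_uu)
      then show ?thesis using dk[of "coord X"] Ksym[OF that Ysl] by simp
    qed
    then have "mat_cong \<pi> 1 Y 0" by (rule Knd[OF Ysl])
    then have mY: "\<pi> dvd Y$i$j" for i j unfolding mat_cong_def by simp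
    have uu: "\<pi> dvd y$(undefined, undefined)"
    proof -
      have "kp (axis (undefined, undefined) 1) y = y$(undefined, undefined)"
        unfolding kp_def by (simp add: uncoord_axis_uu Kzero_l[OF uncoord_sl])
      then show ?thesis using dk by metis
    qed
    show ?thesis unfolding vdvd_def
    proof
      fix p :: "'n \<times> 'n"
      obtain i j where p: "p = (i,j)" by (cases p)
      show "\<pi> dvd y$p"
      proof (cases "i = undefined \<and> j = undefined")
        case True then show ?thesis using uu p by simp
      next
        case False
        then have "Y$i$j = y$p" unfolding Y_def p by (auto simp: uncoord_entry)
        then show ?thesis using mY by metis
      qed
    qed
  qed
  have hT': "\<pi> dvd dotp (coord T) (G *v Z)" if hZ: "vdvd (\<pi>^r) (A *v Z)" for Z
  proof -
    define Zs where "Zs = uncoord Z"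
    have Zsl: "Zs \<in> sl" unfolding Zs_def by (rule uncoord_sl)
    have "vdvd (\<pi>^r) (coord (bracket Zs B))" using hZ unfolding AF F_def Zs_def .
    then have "mdvd (\<pi>^r) (uncoord (coord (bracket Zs B)))" by (rule mdvd_uncoord)
    then have "mdvd (\<pi>^r) (bracket Zs B)" by (simp add: uncoord_coord sl_bracket)
    then have "mdvd (\<pi>^r) (bracket B Zs)" by (subst bracket_antisym) (rule mdvd_neg)
    then have "\<pi> dvd \<kappa> T Zs" by (rule hT[OF Zsl])
    moreover have "dotp (coord T) (G *v Z) = \<kappa> T Zs"
      unfolding kpG[symmetric] kp_def Zs_def by (simp add: uncoord_coord T coord_uu)
    ultimately show ?thesis by simp
  qed
  obtain W' where W': "vdvd (\<pi>^r) (A *v W' - \<pi>^(r-1) *s coord T)"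
    using abstract_key[OF dvr sym skew nondeg r hT'] by blast
  define W where "W = uncoord W'"
  have Wsl: "W \<in> sl" unfolding W_def by (rule uncoord_sl)
  define M where "M = bracket W B - smat (\<pi>^(r-1)) T"
  have Msl: "M \<in> sl" unfolding M_def by (intro sl_diff sl_bracket sl_smat T)
  have "A *v W' - \<pi>^(r-1) *s coord T = coord M"
    unfolding M_def AF F_def W_def by (simp add: coord_diff coord_smat)
  then have "vdvd (\<pi>^r) (coord M)" using W' by simp
  then have "mdvd (\<pi>^r) (uncoord (coord M))" by (rule mdvd_uncoord)
  then have "mdvd (\<pi>^r) M" using Msl by (simp add: uncoord_coord)
  then show ?thesis using Wsl unfolding M_def by blast
qed


theorem mainTheorem2:
  fixes \<pi> :: "'a::idom"
    and \<kappa> :: "'a^'n::finite^'n \<Rightarrow> 'a^'n^'n \<Rightarrow> 'a"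
    and r :: nat
    and E B Xc :: "'a^'n^'n"
  assumes "compact_dvr \<pi>"
    and "good_form \<pi> \<kappa>"
    and "r \<ge> 1"
    and "E \<in> sl" and "B \<in> sl" and "Xc \<in> sl"
    and "mat_cong \<pi> r B E"
    and "shadow \<pi> (r + 1) B = shadow \<pi> r E"
  shows "{Y \<in> shadow \<pi> r E. \<forall>Z \<in> shadow \<pi> r E. \<pi> dvd \<kappa> Xc (bracket Y Z)}
           = shadow \<pi> (r + 1) (B + smat (\<pi> ^ r) Xc)"
proof -
  have dvr: "is_dvr_uniformizer \<pi>" using assms(1) unfolding compact_dvr_def by simp
  have pne: "\<pi> \<noteq> 0" using dvr_facts(1)[OF dvr] .
  have gf: "good_form \<pi> \<kappa>" by (rule assms(2))
  have r: "r \<ge> 1" by (rule assms(3))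
  have Bsl: "B \<in> sl" and Xsl: "Xc \<in> sl" using assms by auto
  note Kadd_r = K_add_r[OF gf] and Ksm = K_sm[OF gf] and Ksym = K_sym[OF gf] and Kinv = K_inv[OF gf]
    and Kdiff_l = K_diff_l[OF gf] and Kdiff_r = K_diff_r[OF gf]
    and Kmdvd_l = K_mdvd_l[OF gf] and Kmdvd_r = K_mdvd_r[OF gf]
  have shdef: "Z \<in> shadow \<pi> k A \<longleftrightarrow> Z \<in> sl \<and> (\<exists>Y\<in>sl. mdvd (\<pi>^k) (bracket Y A) \<and> mdvd \<pi> (Z - Y))" for Z k A
    unfolding shadow_def mat_cong_0 mat_cong_mdvd by simp
  have BE: "mdvd (\<pi>^r) (B - E)" using assms(7) unfolding mat_cong_mdvd .
  have shBE: "shadow \<pi> r E = shadow \<pi> r B"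
  proof -
    have "mdvd (\<pi>^r) (bracket Y B) \<longleftrightarrow> mdvd (\<pi>^r) (bracket Y E)" for Y
    proof -
      have d: "mdvd (\<pi>^r) (bracket Y B - bracket Y E)"
        unfolding bracket_diff_r[symmetric] by (rule mdvd_bracket_r[OF BE])
      have "bracket Y E = bracket Y B - (bracket Y B - bracket Y E)" by simp
      moreover have "bracket Y B = bracket Y E + (bracket Y B - bracket Y E)" by simp
      ultimately show ?thesis using d by (metis mdvd_add mdvd_diff)
    qed
    then show ?thesis unfolding shadow_def mat_cong_0 by simp
  qed
  have hsh: "shadow \<pi> (r + 1) B = shadow \<pi> r B" using assms(8) shBE by simp
  define x where "x = B + smat (\<pi> ^ r) Xc"
  have ppow: "\<pi> * \<pi>^(r-1) = \<pi>^r" using r by (cases r) simp_all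
  show ?thesis
    unfolding x_def[symmetric]
  proof (rule set_eqI, rule iffI)
    fix Y assume "Y \<in> {Y \<in> shadow \<pi> r E. \<forall>Z \<in> shadow \<pi> r E. \<pi> dvd \<kappa> Xc (bracket Y Z)}"
    then have Ysh: "Y \<in> shadow \<pi> r E" and hY: "\<And>Z. Z \<in> shadow \<pi> r E \<Longrightarrow> \<pi> dvd \<kappa> Xc (bracket Y Z)"
      by auto
    have "Y \<in> shadow \<pi> (r+1) B" using Ysh assms(8) by simp
    then obtain Y1 where Ysl: "Y \<in> sl" and Y1sl: "Y1 \<in> sl" and Y1B: "mdvd (\<pi>^(r+1)) (bracket Y1 B)"
      and YY1: "mdvd \<pi> (Y - Y1)"
      unfolding shdef by blast
    define T where "T = bracket Xc Y1"
    have Tsl: "T \<in> sl" unfolding T_def by (rule sl_bracket)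
    have hT: "\<pi> dvd \<kappa> T Z" if Zsl: "Z \<in> sl" and hZ: "mdvd (\<pi>^r) (bracket B Z)" for Z
    proof -
      have "mdvd (\<pi>^r) (bracket Z B)" by (subst bracket_antisym) (rule mdvd_neg[OF hZ])
      moreover have "mdvd \<pi> (Z - Z)" by (simp add: mdvd_zero)
      ultimately have "Z \<in> shadow \<pi> r B" unfolding shdef using Zsl by blast
      then have h1: "\<pi> dvd \<kappa> Xc (bracket Y Z)" using hY shBE by simp
      have h2: "\<pi> dvd \<kappa> Xc (bracket (Y - Y1) Z)"
        by (rule Kmdvd_r[OF pne sl_bracket Xsl mdvd_bracket_l[OF YY1]])
      have "\<kappa> T Z = \<kappa> Xc (bracket Y1 Z)" unfolding T_def by (rule Kinv[OF Xsl Y1sl Zsl])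
      also have "bracket Y1 Z = bracket Y Z - bracket (Y - Y1) Z" by (simp add: bracket_diff_l)
      also have "\<kappa> Xc (bracket Y Z - bracket (Y - Y1) Z) = \<kappa> Xc (bracket Y Z) - \<kappa> Xc (bracket (Y - Y1) Z)"
        by (rule Kdiff_r[OF sl_bracket sl_bracket Xsl])
      finally show ?thesis using h1 h2 by simp
    qed
    obtain W where Wsl: "W \<in> sl" and WR: "mdvd (\<pi>^r) (bracket W B - smat (\<pi>^(r-1)) T)"
      using glue[OF dvr gf r Bsl Tsl hT] by blast
    define R where "R = bracket W B - smat (\<pi>^(r-1)) T"
    define Y' where "Y' = Y1 + smat \<pi> W"
    have Y'sl: "Y' \<in> sl" unfolding Y'_def by (intro sl_add Y1sl sl_smat Wsl)
    have "mdvd \<pi> (Y - Y')"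
    proof -
      have eqY: "Y - Y' = (Y - Y1) - smat \<pi> W" unfolding Y'_def by simp
      show ?thesis unfolding eqY by (rule mdvd_diff[OF YY1 mdvd_smat[OF dvd_refl]])
    qed
    moreover have "mdvd (\<pi>^(r+1)) (bracket Y' x)"
      unfolding mdvd_def
    proof (intro allI)
      fix i j
      define a where "a = bracket Y1 B $ i $ j"
      define b where "b = bracket Y1 Xc $ i $ j"
      define c where "c = bracket W B $ i $ j"
      define d where "d = bracket W Xc $ i $ j"
      have e1: "bracket Y' x $ i $ j = a + \<pi>^r * b + \<pi> * c + \<pi> * (\<pi>^r * d)"
        unfolding Y'_def x_def a_def b_def c_def d_def
        by (simp add: bracket_add_l bracket_add_r bracket_smat_l bracket_smat_r algebra_simps)
      have Tij: "T $ i $ j = - b" unfolding T_def b_def by (subst bracket_antisym) simp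
      have Rij: "R $ i $ j = c + \<pi>^(r-1) * b" unfolding R_def c_def using Tij by simp
      have "\<pi> * c = \<pi> * R$i$j - (\<pi> * \<pi>^(r-1)) * b" using Rij by (simp add: algebra_simps)
      also have "\<dots> = \<pi> * R$i$j - \<pi>^r * b" by (simp only: ppow)
      finally have e2: "bracket Y' x $ i $ j = a + \<pi> * R$i$j + \<pi> * (\<pi>^r * d)"
        using e1 by (simp add: algebra_simps)
      have "\<pi>^(r+1) dvd a" using Y1B unfolding mdvd_def a_def by simp
      moreover have "\<pi>^(r+1) dvd \<pi> * R$i$j"
      proof -
        have "\<pi>^r dvd R$i$j" using WR unfolding mdvd_def R_def by simp
        then have "\<pi> * \<pi>^r dvd \<pi> * R$i$j" by (rule mult_dvd_mono[OF dvd_refl])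
        then show ?thesis by simp
      qed
      moreover have "\<pi>^(r+1) dvd \<pi> * (\<pi>^r * d)" by simp
      ultimately show "\<pi>^(r+1) dvd bracket Y' x $ i $ j" unfolding e2 by (intro dvd_add)
    qed
    ultimately show "Y \<in> shadow \<pi> (r + 1) x" unfolding shdef using Ysl Y'sl by blast
  next
    fix Y assume "Y \<in> shadow \<pi> (r + 1) x"
    then obtain Y' where Ysl: "Y \<in> sl" and Y'sl: "Y' \<in> sl" and Y'x: "mdvd (\<pi>^(r+1)) (bracket Y' x)"
      and YY': "mdvd \<pi> (Y - Y')"
      unfolding shdef by blast
    have xB: "smat (\<pi>^r) Xc = x - B" unfolding x_def by simp
    have "bracket Y' B = bracket Y' x - smat (\<pi>^r) (bracket Y' Xc)"
      unfolding x_def by (simp add: bracket_add_r bracket_smat_r)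
    moreover have "mdvd (\<pi>^r) (bracket Y' x)" by (rule mdvd_mono[OF _ Y'x]) (simp add: le_imp_power_dvd)
    ultimately have "mdvd (\<pi>^r) (bracket Y' B)" by (simp add: mdvd_diff mdvd_smat)
    then have Ysh: "Y \<in> shadow \<pi> r E" unfolding shBE shdef using Ysl Y'sl YY' by blast
    have "\<pi> dvd \<kappa> Xc (bracket Y Z)" if Zsh: "Z \<in> shadow \<pi> r E" for Z
    proof -
      have "Z \<in> shadow \<pi> (r+1) B" using Zsh assms(8) by simp
      then obtain Z' where Zsl: "Z \<in> sl" and Z'sl: "Z' \<in> sl" and Z'B: "mdvd (\<pi>^(r+1)) (bracket Z' B)"
        and ZZ': "mdvd \<pi> (Z - Z')"
        unfolding shdef by blast
      define D where "D = bracket (Y - Y') Z + bracket Y' (Z - Z')"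
      have Dsl: "D \<in> sl" unfolding D_def by (intro sl_add sl_bracket)
      have DYZ: "bracket Y Z = bracket Y' Z' + D"
        unfolding D_def by (simp add: bracket_diff_l bracket_diff_r)
      have mD: "mdvd \<pi> D" unfolding D_def
        by (intro mdvd_add mdvd_bracket_l mdvd_bracket_r YY' ZZ')
      have h1: "\<pi> dvd \<kappa> Xc D" by (rule Kmdvd_r[OF pne Dsl Xsl mD])
      have "\<pi>^r * \<kappa> Xc (bracket Y' Z') = \<kappa> (smat (\<pi>^r) Xc) (bracket Y' Z')"
        by (rule Ksm[OF Xsl sl_bracket, symmetric])
      also have "\<dots> = \<kappa> (bracket (smat (\<pi>^r) Xc) Y') Z'"
        by (rule Kinv[OF sl_smat[OF Xsl] Y'sl Z'sl, symmetric])
      also have "bracket (smat (\<pi>^r) Xc) Y' = bracket Y' B - bracket Y' x"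
        unfolding xB bracket_diff_l by (simp add: bracket_antisym[of x] bracket_antisym[of B])
      also have "\<kappa> (bracket Y' B - bracket Y' x) Z' = \<kappa> (bracket Y' B) Z' - \<kappa> (bracket Y' x) Z'"
        by (rule Kdiff_l[OF sl_bracket sl_bracket Z'sl])
      also have "\<kappa> (bracket Y' B) Z' = \<kappa> Y' (bracket B Z')" by (rule Kinv[OF Y'sl Bsl Z'sl])
      finally have eq: "\<pi>^r * \<kappa> Xc (bracket Y' Z') = \<kappa> Y' (bracket B Z') - \<kappa> (bracket Y' x) Z'" .
      have p0: "\<pi>^(r+1) \<noteq> 0" using pne by simp
      have "mdvd (\<pi>^(r+1)) (bracket B Z')" by (subst bracket_antisym) (rule mdvd_neg[OF Z'B])
      then have d1: "\<pi>^(r+1) dvd \<kappa> Y' (bracket B Z')" by (rule Kmdvd_r[OF p0 sl_bracket Y'sl])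
      have d2: "\<pi>^(r+1) dvd \<kappa> (bracket Y' x) Z'" by (rule Kmdvd_l[OF p0 sl_bracket Z'sl Y'x])
      have "\<pi>^r * \<pi> dvd \<pi>^r * \<kappa> Xc (bracket Y' Z')"
        unfolding eq using dvd_diff[OF d1 d2] by (simp add: mult.commute)
      then have h2: "\<pi> dvd \<kappa> Xc (bracket Y' Z')" using pne by simp
      have "\<kappa> Xc (bracket Y Z) = \<kappa> Xc (bracket Y' Z') + \<kappa> Xc D"
        unfolding DYZ by (rule Kadd_r[OF sl_bracket Dsl Xsl])
      then show ?thesis using h1 h2 by simp
    qed
    then show "Y \<in> {Y \<in> shadow \<pi> r E. \<forall>Z \<in> shadow \<pi> r E. \<pi> dvd \<kappa> Xc (bracket Y Z)}"
      using Ysh by blast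
  qed
qed


end
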